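(* For every normalized Hausdorff moment sequence $\mathbf a=(a_n)_{n\ge0}$ we have $\lim_{n\to\infty}T^{\circ n}(\mathbf a)=\mathbf m$ coordinatewise, i.e. $\lim_{n\to\infty}(T^{\circ n}(\mathbf a))_k=m_k$ for every $k\ge0$. Equivalently, for every probability measure $\tau$ on $[0,1]$, $\widehat T^{\circ n}(\tau)\to\mu$ weakly.
   Context: Let $\mathbf m=(m_n)_{n\ge0}$ be the unique sequence of positive reals with $m_0=1$ and $(1+m_1+\cdots+m_n)\,m_n=1$ for $n\ge1$; it is a Hausdorff moment sequence with representing probability measure $\mu$ on $[0,1]$. A normalized Hausdorff moment sequence is $\mathbf a=(a_n)_n$ with $a_n=\int_0^1t^n\,d\nu(t)$ for a probability measure $\nu$ on $[0,1]$. The map $T$ is $T(\mathbf a)_n=1/(a_0+a_1+\cdots+a_n)$, $n\ge0$; it maps normalized Hausdorff moment sequences to normalized Hausdorff moment sequences, and $\widehat T$ denotes the induced map on probability measures on $[0,1]$. $T^{\circ n}$ is the $n$-fold iterate. *)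

theory Defs
  imports "HOL-Probability.Probability"
begin

definition normalized_hausdorff_moment_seq :: "(nat \<Rightarrow> real) \<Rightarrow> bool" where
  "normalized_hausdorff_moment_seq a \<longleftrightarrow>
     (\<exists>\<nu> :: real measure. prob_space \<nu> \<and> sets \<nu> = sets borel \<and>
        measure \<nu> {0..1} = 1 \<and>
        (\<forall>n. a n = (\<integral>t. t ^ n \<partial>\<nu>)))"

definition T_map :: "(nat \<Rightarrow> real) \<Rightarrow> (nat \<Rightarrow> real)" where
  "T_map a = (\<lambda>n. 1 / (\<Sum>k\<le>n. a k))"

definition mseq :: "nat \<Rightarrow> real" where
  "mseq = (THE m. m 0 = 1 \<and> (\<forall>n. 0 < m n) \<and>
                  (\<forall>n\<ge>1. (1 + (\<Sum>k=1..n. m k)) * m n = 1))"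

end

theory Submission
  imports Defs
begin

lemma contr_lim:
  fixes e d :: "nat \<Rightarrow> real"
  assumes e0: "\<And>n. 0 \<le> e n" and q0: "0 \<le> q" and q1: "q < 1"
    and st: "\<And>n. e (Suc n) \<le> q * e n + d n" and dl: "d \<longlonglongrightarrow> 0"
  shows "e \<longlonglongrightarrow> 0"
proof (rule LIMSEQ_I)
  fix r :: real assume r: "0 < r"
  define \<epsilon> where "\<epsilon> = r / 2"
  have ep: "\<epsilon> > 0" using r by (simp add: \<epsilon>_def)
  have "\<epsilon> * (1 - q) > 0" using ep q1 by simp
  from LIMSEQ_D[OF dl this] obtain N where N: "\<And>n. n \<ge> N \<Longrightarrow> norm (d n - 0) < \<epsilon> * (1 - q)" by blast
  have bound: "e (N + i) \<le> q ^ i * e N + \<epsilon>" for i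
  proof (induction i)
    case 0 then show ?case using ep by simp
  next
    case (Suc i)
    have "e (N + Suc i) \<le> q * e (N + i) + d (N + i)" using st[of "N+i"] by simp
    also have "\<dots> \<le> q * (q ^ i * e N + \<epsilon>) + \<epsilon> * (1 - q)"
      using mult_left_mono[OF Suc q0] N[of "N+i"] by auto
    also have "\<dots> = q ^ Suc i * e N + \<epsilon>" by (simp add: algebra_simps)
    finally show ?case .
  qed
  have "(\<lambda>i. q ^ i * e N) \<longlonglongrightarrow> 0"
  proof -
    have "(\<lambda>i. q ^ i) \<longlonglongrightarrow> 0" by (rule LIMSEQ_power_zero) (use q0 q1 in auto)
    then show ?thesis by (rule tendsto_mult_left_zero)
  qed
  from LIMSEQ_D[OF this ep] obtain M where M: "\<And>i. i \<ge> M \<Longrightarrow> norm (q ^ i * e N - 0) < \<epsilon>" by blast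
  show "\<exists>no. \<forall>n\<ge>no. norm (e n - 0) < r"
  proof (intro exI allI impI)
    fix n assume n: "n \<ge> N + M"
    have "e n = e (N + (n - N))" using n by simp
    also have "\<dots> \<le> q ^ (n - N) * e N + \<epsilon>" by (rule bound)
    also have "\<dots> < \<epsilon> + \<epsilon>"
    proof -
      have "M \<le> n - N" using n by simp
      from M[OF this] have "\<bar>q ^ (n - N) * e N\<bar> < \<epsilon>" by simp
      then show ?thesis by linarith
    qed
    finally show "norm (e n - 0) < r" using e0[of n] by (simp add: \<epsilon>_def)
  qed
qed

fun gpair :: "nat \<Rightarrow> real \<times> real" where
  "gpair 0 = (1, 1)"
| "gpair (Suc n) = (let S = snd (gpair n); x = (sqrt (S^2 + 4) - S) / 2 in (x, S + x))"

definition m0 :: "nat \<Rightarrow> real" where "m0 n = fst (gpair n)"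

lemma quad_root:
  fixes S :: real
  shows "(sqrt (S^2 + 4) - S) / 2 > 0" "((sqrt (S^2 + 4) - S) / 2) * (S + (sqrt (S^2 + 4) - S) / 2) = 1"
proof -
  have "sqrt (S^2 + 4) > sqrt (S^2)" by (rule real_sqrt_less_mono) simp
  then have "sqrt (S^2 + 4) > S" using abs_ge_self[of S] by simp
  then show "(sqrt (S^2 + 4) - S) / 2 > 0" by simp
  have sq: "(sqrt (S^2 + 4))^2 = S^2 + 4" by (simp add: add_nonneg_nonneg)
  have "((sqrt (S^2 + 4) - S) / 2) * (S + (sqrt (S^2 + 4) - S) / 2)
        = ((sqrt (S^2 + 4))^2 - S^2) / 4" by (simp add: field_simps power2_eq_square)
  also have "\<dots> = 1" using sq by simp
  finally show "((sqrt (S^2 + 4) - S) / 2) * (S + (sqrt (S^2 + 4) - S) / 2) = 1" .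
qed

lemma gpair_snd: "snd (gpair n) = (\<Sum>k\<le>n. m0 k)"
  by (induction n) (simp_all add: m0_def Let_def)

lemma m0_pos: "m0 n > 0"
proof (cases n)
  case 0 then show ?thesis by (simp add: m0_def)
next
  case (Suc p)
  then have "m0 n = (sqrt ((snd (gpair p))^2 + 4) - snd (gpair p)) / 2" by (simp add: m0_def Let_def)
  then show ?thesis by (simp only:) (rule quad_root(1))
qed

lemma m0_eq: "(\<Sum>k\<le>n. m0 k) * m0 n = 1"
proof (cases n)
  case 0 then show ?thesis by (simp add: m0_def)
next
  case (Suc p)
  define S where "S = snd (gpair p)"
  have e1: "(\<Sum>k\<le>n. m0 k) = S + m0 n" using Suc by (simp add: gpair_snd S_def)
  have x: "m0 n = (sqrt (S^2 + 4) - S) / 2"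
    using Suc by (simp add: m0_def Let_def S_def)
  have "m0 n * (S + m0 n) = 1" unfolding x by (rule quad_root(2))
  then show ?thesis using e1 by (simp add: mult.commute)
qed

lemma sum_split0: "(\<Sum>k\<le>n. f k) = f 0 + (\<Sum>k=1..n. (f k :: real))" for f :: "nat \<Rightarrow> real" and n :: nat
  unfolding atMost_atLeast0 by (subst sum.atLeast_Suc_atMost) auto

definition Pm :: "(nat \<Rightarrow> real) \<Rightarrow> bool" where
  "Pm m \<longleftrightarrow> m 0 = 1 \<and> (\<forall>n. 0 < m n) \<and> (\<forall>n\<ge>1. (1 + (\<Sum>k=1..n. m k)) * m n = 1)"

lemma Pm_eq: assumes "Pm m" shows "(\<Sum>k\<le>n. m k) * m n = 1"
proof (cases "n = 0")
  case True then show ?thesis using assms by (simp add: Pm_def)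
next
  case False then show ?thesis using assms by (simp add: Pm_def sum_split0)
qed

lemma m0_0: "m0 0 = 1" by (simp add: m0_def)

lemma Pm_m0: "Pm m0"
  unfolding Pm_def
proof (intro conjI allI impI)
  fix n :: nat
  have "(1 + (\<Sum>k=1..n. m0 k)) = (\<Sum>k\<le>n. m0 k)" using sum_split0[of m0 n] m0_0 by simp
  then show "(1 + (\<Sum>k=1..n. m0 k)) * m0 n = 1" using m0_eq by simp
qed (auto simp: m0_0 m0_pos)

lemma quad_uniq:
  fixes S x y :: real
  assumes "x > 0" "y > 0" "(S + x) * x = 1" "(S + y) * y = 1"
  shows "x = y"
proof (rule ccontr)
  assume "x \<noteq> y"
  then consider "x < y" | "y < x" by linarith
  then show False
  proof cases
    case 1
    have "S + x > 0"
    proof (rule ccontr)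
      assume "\<not> S + x > 0"
      then have "(S + x) * x \<le> 0" using assms by (intro mult_nonpos_nonneg) auto
      then show False using assms by simp
    qed
    then have "(S + x) * x < (S + y) * y" using 1 assms by (intro mult_strict_mono) auto
    then show False using assms by simp
  next
    case 2
    have "S + y > 0"
    proof (rule ccontr)
      assume "\<not> S + y > 0"
      then have "(S + y) * y \<le> 0" using assms by (intro mult_nonpos_nonneg) auto
      then show False using assms by simp
    qed
    then have "(S + y) * y < (S + x) * x" using 2 assms by (intro mult_strict_mono) auto
    then show False using assms by simp
  qed
qed

lemma Pm_uniq: assumes "Pm m" shows "m = m0"
proof
  fix n show "m n = m0 n"
  proof (induction n rule: less_induct)
    case (less n)
    have S: "(\<Sum>k<n. m k) = (\<Sum>k<n. m0 k)" using less by (intro sum.cong) auto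
    have "((\<Sum>k<n. m k) + m n) * m n = 1" using Pm_eq[OF assms, of n] by (simp add: lessThan_Suc_atMost[symmetric])
    moreover have "((\<Sum>k<n. m0 k) + m0 n) * m0 n = 1" using Pm_eq[OF Pm_m0, of n] by (simp add: lessThan_Suc_atMost[symmetric])
    ultimately show ?case using S assms m0_pos[of n] quad_uniq[of "m n" "m0 n" "\<Sum>k<n. m k"] by (simp add: Pm_def)
  qed
qed

lemma mseq_m0: "mseq = m0"
proof -
  have "mseq = (THE m. Pm m)" unfolding mseq_def Pm_def by simp
  also have "\<dots> = m0" using Pm_m0 Pm_uniq by (rule the_equality)
  finally show ?thesis .
qed

definition Inv :: "(nat \<Rightarrow> real) \<Rightarrow> bool" where
  "Inv c \<longleftrightarrow> c 0 = 1 \<and> (\<forall>j. 0 \<le> c j)"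

lemma Inv_sum_ge1: assumes "Inv c" shows "1 \<le> (\<Sum>k\<le>n. c k)"
proof -
  have "c 0 \<le> (\<Sum>k\<le>n. c k)" using assms by (intro member_le_sum) (auto simp: Inv_def)
  then show ?thesis using assms by (simp add: Inv_def)
qed

lemma Inv_sum_ge1': assumes "Inv c" "0 < k" shows "1 \<le> (\<Sum>j<k. c j)"
proof -
  have "c 0 \<le> (\<Sum>j<k. c j)" using assms by (intro member_le_sum) (auto simp: Inv_def)
  then show ?thesis using assms by (simp add: Inv_def)
qed

lemma Inv_T: assumes "Inv c" shows "Inv (T_map c)"
  unfolding Inv_def
proof (intro conjI allI)
  show "T_map c 0 = 1" using assms by (simp add: T_map_def Inv_def)
  fix j show "0 \<le> T_map c j" using Inv_sum_ge1[OF assms, of j] by (simp add: T_map_def)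
qed

lemma Inv_m0: "Inv m0"
  using m0_0 m0_pos by (simp add: Inv_def less_imp_le)

lemma Inv_a: assumes "normalized_hausdorff_moment_seq a" shows "Inv a"
proof -
  from assms obtain \<nu> :: "real measure" where P: "prob_space \<nu>" and S: "sets \<nu> = sets borel"
    and M: "measure \<nu> {0..1} = 1" and A: "\<forall>n. a n = (\<integral>t. t ^ n \<partial>\<nu>)"
    unfolding normalized_hausdorff_moment_seq_def by blast
  interpret prob_space \<nu> by (rule P)
  have "a 0 = 1" using A by (simp add: prob_space)
  moreover have "0 \<le> a j" for j
  proof -
    have "AE t in \<nu>. t \<in> {0..1}" using M by (intro AE_prob_1) simp
    then have "AE t in \<nu>. 0 \<le> t ^ j" by eventually_elim auto
    then show ?thesis using A by (simp add: integral_nonneg_AE)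
  qed
  ultimately show ?thesis by (simp add: Inv_def)
qed

lemma step_ineq:
  fixes sn xn s xs :: real
  assumes "1 \<le> sn" "0 \<le> xn" "0 < xs" "xs * (s + xs) = 1"
  shows "\<bar>1 / (sn + xn) - xs\<bar> \<le> xs * (\<bar>xn - xs\<bar> + \<bar>sn - s\<bar>)"
proof -
  define X where "X = (s - sn) + (xs - xn)"
  have D: "1 \<le> sn + xn" using assms by simp
  have e1: "1 / (sn + xn) - xs = (1 - xs * (sn + xn)) / (sn + xn)" using D by (simp add: field_simps)
  have e2: "xs * X = xs * (s + xs) - xs * (sn + xn)" unfolding X_def by (simp add: algebra_simps)
  have e3: "1 / (sn + xn) - xs = xs * X / (sn + xn)" using e1 e2 assms(4) by simp
  have "\<bar>xs * X / (sn + xn)\<bar> = xs * \<bar>X\<bar> / (sn + xn)" using D assms(3) by (simp add: abs_mult)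
  also have "\<dots> \<le> xs * \<bar>X\<bar>"
  proof -
    have nn: "0 \<le> xs * \<bar>X\<bar>" using assms(3) by simp
    have "xs * \<bar>X\<bar> * 1 \<le> xs * \<bar>X\<bar> * (sn + xn)" by (rule mult_left_mono[OF D nn])
    moreover have "0 < sn + xn" using D by simp
    ultimately show ?thesis by (simp add: pos_divide_le_eq)
  qed
  also have "\<dots> \<le> xs * (\<bar>xn - xs\<bar> + \<bar>sn - s\<bar>)" using assms(3) unfolding X_def
    by (intro mult_left_mono) auto
  finally show ?thesis using e3 by simp
qed

theorem theorem2p3:
  fixes a :: "nat \<Rightarrow> real"
  assumes "normalized_hausdorff_moment_seq a"
  shows "\<forall>k. (\<lambda>n. (T_map ^^ n) a k) \<longlonglongrightarrow> mseq k"
proof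
  have Ia: "Inv a" by (rule Inv_a[OF assms])
  define b where "b n = (T_map ^^ n) a" for n
  have bS: "b (Suc n) = T_map (b n)" for n by (simp add: b_def)
  have Ib: "Inv (b n)" for n
    by (induction n) (simp_all add: b_def Ia Inv_T)
  fix k
  show "(\<lambda>n. (T_map ^^ n) a k) \<longlonglongrightarrow> mseq k"
    unfolding b_def[symmetric] mseq_m0
  proof (induction k rule: less_induct)
    case (less k)
    show ?case
    proof (cases "k = 0")
      case True
      have "b n 0 = 1" for n using Ib[of n] by (simp add: Inv_def)
      then show ?thesis using True m0_0 by simp
    next
      case False
      then have k0: "0 < k" by simp
      define s where "s n = (\<Sum>j<k. b n j)" for n
      define S where "S = (\<Sum>j<k. m0 j)"
      have sl: "s \<longlonglongrightarrow> S" unfolding s_def S_def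
        by (rule tendsto_sum) (use less.IH in auto)
      have s1: "1 \<le> s n" for n unfolding s_def by (rule Inv_sum_ge1'[OF Ib k0])
      have S1: "1 \<le> S" unfolding S_def by (rule Inv_sum_ge1'[OF Inv_m0 k0])
      have sumk: "(\<Sum>j\<le>k. c j) = (\<Sum>j<k. c j) + c k" for c :: "nat \<Rightarrow> real"
        by (simp add: lessThan_Suc_atMost[symmetric])
      have rec: "b (Suc n) k = 1 / (s n + b n k)" for n
        unfolding bS T_map_def s_def sumk ..
      have fx: "m0 k * (S + m0 k) = 1" using m0_eq[of k] unfolding sumk S_def by (simp add: mult.commute)
      have mk: "0 < m0 k" by (rule m0_pos)
      have q1: "m0 k < 1"
      proof (rule ccontr)
        assume "\<not> m0 k < 1"
        then have "1 * 1 < m0 k * (S + m0 k)" using S1 mk by (intro mult_le_less_imp_less) auto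
        then show False using fx by simp
      qed
      have bnn: "0 \<le> b n k" for n using Ib[of n] by (simp add: Inv_def)
      have "(\<lambda>n. \<bar>b n k - m0 k\<bar>) \<longlonglongrightarrow> 0"
      proof (rule contr_lim[where q = "m0 k" and d = "\<lambda>n. m0 k * \<bar>s n - S\<bar>"])
        fix n
        show "\<bar>b (Suc n) k - m0 k\<bar> \<le> m0 k * \<bar>b n k - m0 k\<bar> + m0 k * \<bar>s n - S\<bar>"
          unfolding rec using step_ineq[OF s1 bnn mk fx, of n n] by (simp add: algebra_simps)
      next
        have "(\<lambda>n. s n - S) \<longlonglongrightarrow> 0" by (rule LIM_zero[OF sl])
        then have "(\<lambda>n. \<bar>s n - S\<bar>) \<longlonglongrightarrow> 0" by (rule tendsto_rabs_zero)
        then show "(\<lambda>n. m0 k * \<bar>s n - S\<bar>) \<longlonglongrightarrow> 0" by (rule tendsto_mult_right_zero)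
      qed (use mk q1 in auto)
      then have "(\<lambda>n. b n k - m0 k) \<longlonglongrightarrow> 0" by (simp add: tendsto_rabs_zero_iff)
      then show ?thesis by (rule LIM_zero_cancel)
    qed
  qed
qed

end
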